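(* With $\omega>0$, $c\in[0,1]$, $h>0$ satisfying the stability condition and $\rho(c,\omega,h)$ as in Proposition 9.3, one has $$\rho(c,\omega,h)=\frac12\,\frac{h^4r^2}{(1+\omega^{-2})(1+\omega^{-2}-h^2r)},$$ where $$r=r(c,\omega,h)=\tfrac14(1-c^2+\omega^{-2})^2+c^2(1-c^2+\omega^{-2})R(ch),\qquad R(\zeta)=\frac{1-\zeta\cot\zeta}{\zeta^2}.$$
   Context: Setting of Proposition 9.3: $H=\frac12\omega^{-2}p^2+\frac12(\omega^2+1)q^2$; $\psi_h=\varphi^{(B)}_{h/2}\circ\varphi^{(A)}_h\circ\varphi^{(B)}_{h/2}$ with $(A)$: $\dot q=\omega^{-2}p,\dot p=-c^2\omega^2q$ and $(B)$: $\dot q=0,\dot p=-((1-c^2)\omega^2+1)q$; stability: $ch+2\arctan(h(1+(1-c^2)\omega^2)/(2c\omega^2))<\pi$ ($c>0$), $h<2\omega/\sqrt{1+\omega^2}$ ($c=0$); $\cos\theta_h=\frac12\operatorname{trace}$ of the one-step matrix; $\chi_h=\sin(ch)/(c\omega^2\sin\theta_h)$ ($c>0$) or $h/(\omega^2\sin\theta_h)$ ($c=0$); $\hat\chi_h^2=(\omega^2+\omega^4)\chi_h^2$; $\rho=\frac12(\hat\chi_h^2+\hat\chi_h^{-2}-2)$. For $c=0$ the term involving $R$ is absent (multiplied by $c^2=0$). *)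

theory Defs
  imports "HOL-Analysis.Analysis"
begin

text \<open>Setting of Proposition 9.3. States are column vectors (q,p); maps are 2x2 matrices.\<close>

definition mat2 :: "real \<Rightarrow> real \<Rightarrow> real \<Rightarrow> real \<Rightarrow> real^2^2" where
  "mat2 a b c d = vector [vector [a, b], vector [c, d]]"

text \<open>Exact flow of (A): q' = w^-2 p, p' = -c^2 w^2 q, over time t.\<close>
definition flowA :: "real \<Rightarrow> real \<Rightarrow> real \<Rightarrow> real^2^2" where
  "flowA c w t = (if c = 0 then mat2 1 (t / w\<^sup>2) 0 1
     else mat2 (cos (c*t)) (sin (c*t) / (c * w\<^sup>2)) (- c * w\<^sup>2 * sin (c*t)) (cos (c*t)))"

text \<open>Exact flow of (B): q' = 0, p' = -((1-c^2) w^2 + 1) q, over time t.\<close>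
definition flowB :: "real \<Rightarrow> real \<Rightarrow> real \<Rightarrow> real^2^2" where
  "flowB c w t = mat2 1 0 (- t * ((1 - c\<^sup>2) * w\<^sup>2 + 1)) 1"

definition step_matrix :: "real \<Rightarrow> real \<Rightarrow> real \<Rightarrow> real^2^2" where
  "step_matrix c w h = flowB c w (h/2) ** flowA c w h ** flowB c w (h/2)"

definition stable :: "real \<Rightarrow> real \<Rightarrow> real \<Rightarrow> bool" where
  "stable c w h = (if c > 0
     then c*h + 2 * arctan (h * (1 + (1 - c\<^sup>2) * w\<^sup>2) / (2 * c * w\<^sup>2)) < pi
     else h < 2 * w / sqrt (1 + w\<^sup>2))"

definition theta :: "real \<Rightarrow> real \<Rightarrow> real \<Rightarrow> real" where
  "theta c w h = arccos (trace (step_matrix c w h) / 2)"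

definition chi :: "real \<Rightarrow> real \<Rightarrow> real \<Rightarrow> real" where
  "chi c w h = (if c > 0 then sin (c*h) / (c * w\<^sup>2 * sin (theta c w h))
                else h / (w\<^sup>2 * sin (theta c w h)))"

definition chi_hat_sq :: "real \<Rightarrow> real \<Rightarrow> real \<Rightarrow> real" where
  "chi_hat_sq c w h = (w\<^sup>2 + w^4) * (chi c w h)\<^sup>2"

definition rho :: "real \<Rightarrow> real \<Rightarrow> real \<Rightarrow> real" where
  "rho c w h = (chi_hat_sq c w h + inverse (chi_hat_sq c w h) - 2) / 2"

definition Rfun :: "real \<Rightarrow> real" where
  "Rfun z = (1 - z * cot z) / z\<^sup>2"

definition rfun :: "real \<Rightarrow> real \<Rightarrow> real \<Rightarrow> real" where
  "rfun c w h = (1 - c\<^sup>2 + 1 / w\<^sup>2)\<^sup>2 / 4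
     + (if c = 0 then 0 else c\<^sup>2 * (1 - c\<^sup>2 + 1 / w\<^sup>2) * Rfun (c*h))"

end

theory Submission
  imports Defs
begin

lemma mat2_nth: "mat2 a b c d $ 1 $ 1 = a" "mat2 a b c d $ 1 $ 2 = b"
  "mat2 a b c d $ 2 $ 1 = c" "mat2 a b c d $ 2 $ 2 = d"
  by (simp_all add: mat2_def)

lemma mat2_mult: "mat2 a b c d ** mat2 e f g k = mat2 (a*e+b*g) (a*f+b*k) (c*e+d*g) (c*f+d*k)"
  by (simp add: vec_eq_iff forall_2 matrix_matrix_mult_def sum_2 mat2_nth)

lemma mat2_trace: "trace (mat2 a b c d) = a + d"
  by (simp add: trace_def sum_2 mat2_nth)

lemma trace_step: "trace (step_matrix c w h) / 2 =
   (if c = 0 then 1 - h^2 * ((w\<^sup>2 + 1)/w\<^sup>2) / 2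
    else cos (c*h) - h * (1 - c\<^sup>2 + 1/w\<^sup>2) * sin (c*h) / (2*c))" if "w > 0"
  using that
  by (auto simp add: step_matrix_def flowA_def flowB_def mat2_mult mat2_trace field_simps power2_eq_square)

lemma rho_alg:
  fixes X u D h r :: real
  assumes "u > 0" "D = u - h^2 * r" "X * D = u" 
  shows "(X + inverse X - 2) / 2 = (1/2) * (h^4 * r\<^sup>2) / (u * D)"
proof -
  have D: "D \<noteq> 0" using assms by auto
  have X: "X = u / D" using assms D by (simp add: field_simps)
  have "h^2 * r = u - D" using assms by simp
  hence "h^4 * r\<^sup>2 = (u - D)^2" by (metis power2_eq_square power_mult_distrib numeral_Bit0 power_add mult_2)
  thus ?thesis using D assms(1) unfolding X by (simp add: field_simps power2_eq_square)
qed

theorem proposition9p4: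
  fixes c w h :: real
  assumes "w > 0" and "0 \<le> c" and "c \<le> 1" and "h > 0" and "stable c w h"
  shows "rho c w h =
    (1/2) * (h^4 * (rfun c w h)\<^sup>2) /
      ((1 + 1 / w\<^sup>2) * (1 + 1 / w\<^sup>2 - h\<^sup>2 * rfun c w h))"
proof -
  define x where "x = trace (step_matrix c w h) / 2"
  define u where "u = 1 + 1 / w\<^sup>2"
  define r where "r = rfun c w h"
  define D where "D = u - h^2 * r"
  define s2 where "s2 = 1 - x^2"
  have u0: "u > 0" unfolding u_def by (simp add: add_pos_nonneg)
  have th: "theta c w h = arccos x" unfolding theta_def x_def ..
  have key: "\<bar>x\<bar> < 1 \<and> chi_hat_sq c w h * D = u"
  proof (cases "c = 0")
    case True
    have xe: "x = 1 - h^2 * u / 2" using trace_step[OF assms(1), of c h] True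
      unfolding x_def u_def using assms(1) by (simp add: field_simps)
    have st: "h < 2 * w / sqrt (1 + w\<^sup>2)" using assms(5) True by (simp add: stable_def)
    have sq: "sqrt (1 + w\<^sup>2) > 0" by (simp add: add_pos_nonneg)
    have "h * sqrt (1 + w\<^sup>2) < 2 * w" using st sq by (simp add: field_simps)
    hence "(h * sqrt (1 + w\<^sup>2))^2 < (2*w)^2"
      using assms(4) sq by (intro power_strict_mono) auto
    hence "h^2 * (1 + w\<^sup>2) < 4 * w^2" by (simp add: power_mult_distrib)
    hence hu: "h^2 * u < 4" unfolding u_def using assms(1) by (simp add: field_simps)
    have hu0: "h^2 * u > 0" using u0 assms(4) by simp
    have ax: "\<bar>x\<bar> < 1" using xe hu hu0 by auto
    have rr: "r = u^2/4" unfolding r_def rfun_def u_def using True by simp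
    have s2e: "s2 = h^2 * D" unfolding s2_def D_def rr xe by (simp add: field_simps power2_eq_square)
    have sin2: "(sin (theta c w h))^2 = s2" unfolding th s2_def
      using sin_arccos_abs[of x] ax abs_square_less_1[of x] by simp
    have s2p: "s2 > 0" unfolding s2_def using ax by (simp add: abs_square_less_1)
    have "chi_hat_sq c w h = u * h^2 / s2"
      unfolding chi_hat_sq_def chi_def using True sin2 s2p assms(1) unfolding u_def
      by (simp add: power_divide power_mult_distrib field_simps power2_eq_square eval_nat_numeral)
    moreover have "D \<noteq> 0" using s2e s2p by auto
    ultimately show ?thesis using ax s2e s2p assms(4) by (simp add: field_simps)
  next
    case False
    hence c0: "c > 0" using assms(2) by simp
    define v where "v = 1 - c\<^sup>2 + 1/w\<^sup>2"
    have v0: "v > 0"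
    proof -
      have "c\<^sup>2 \<le> 1" using assms(2,3) by (simp add: power_le_one)
      moreover have "1/w\<^sup>2 > 0" using assms(1) by simp
      ultimately show ?thesis unfolding v_def by linarith
    qed
    define \<phi> where "\<phi> = arctan (h * v / (2*c))"
    have xe: "x = cos (c*h) - h * v * sin (c*h) / (2*c)"
      using trace_step[OF assms(1), of c h] False unfolding x_def v_def by simp
    have eqa: "h * (1 + (1 - c\<^sup>2) * w\<^sup>2) / (2 * c * w\<^sup>2) = h * v / (2*c)"
      unfolding v_def using assms(1) c0 by (simp add: field_simps)
    have st: "c*h + 2*\<phi> < pi" using assms(5) c0 unfolding stable_def \<phi>_def eqa
      by simp
    have p0: "\<phi> > 0" unfolding \<phi>_def using v0 c0 assms(4) by (simp add: arctan_less_zero_iff zero_less_arctan_iff)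
    have p1: "\<phi> < pi/2" unfolding \<phi>_def using arctan_ubound by simp
    have cp: "cos \<phi> > 0" using p0 p1 by (simp add: cos_gt_zero)
    have tp: "sin \<phi> / cos \<phi> = h * v / (2*c)" unfolding \<phi>_def
      using tan_arctan[of "h * v / (2 * c)"] by (simp add: tan_def)
    have ch0: "c*h > 0" using c0 assms(4) by simp
    have xe2: "x = cos (c*h + \<phi>) / cos \<phi>"
      unfolding xe cos_add using cp tp by (simp add: field_simps)
    have a1: "cos (c*h + \<phi>) < cos \<phi>"
      by (rule cos_monotone_0_pi) (use p0 ch0 st in auto)
    have a2: "cos (pi - \<phi>) < cos (c*h + \<phi>)"
      by (rule cos_monotone_0_pi) (use p0 ch0 st in auto)
    hence a2': "- cos \<phi> < cos (c*h + \<phi>)" by simp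
    have ax: "\<bar>x\<bar> < 1" unfolding xe2 using a1 a2' cp by (simp add: abs_less_iff field_simps)
    have Sp: "sin (c*h) > 0" using ch0 st p0 by (intro sin_gt_zero) auto
    have rr: "r = v^2/4 + c^2 * v * ((1 - c*h * (cos (c*h)/sin (c*h))) / (c*h)^2)"
      unfolding r_def rfun_def Rfun_def cot_def v_def using False by simp
    have uv: "u = v + c^2" unfolding u_def v_def by simp
    have s2e: "c^2 * s2 = (sin (c*h))^2 * D"
    proof -
      have "c^2 * s2 = c^2 * (1 - (cos (c*h))^2) + h * v * c * sin (c*h) * cos (c*h) - h^2 * v^2 * (sin (c*h))^2 / 4"
        unfolding s2_def xe using c0 by (simp add: field_simps power2_eq_square)
      also have "... = c^2 * (sin (c*h))^2 + h * v * c * sin (c*h) * cos (c*h) - h^2 * v^2 * (sin (c*h))^2 / 4"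
        by (simp add: sin_squared_eq)
      also have "... = (sin (c*h))^2 * D"
        unfolding D_def rr uv using c0 Sp assms(4)
        by (simp add: field_simps power2_eq_square)
      finally show ?thesis .
    qed
    have sin2: "(sin (theta c w h))^2 = s2" unfolding th s2_def
      using sin_arccos_abs[of x] ax abs_square_less_1[of x] by simp
    have s2p: "s2 > 0" unfolding s2_def using ax by (simp add: abs_square_less_1)
    have "chi_hat_sq c w h = u * (sin (c*h))^2 / (c^2 * s2)"
      unfolding chi_hat_sq_def chi_def using c0 sin2 s2p assms(1) unfolding u_def
      by (simp add: power_divide power_mult_distrib field_simps power2_eq_square eval_nat_numeral)
    also have "... = u * (sin (c*h))^2 / ((sin (c*h))^2 * D)" by (simp only: s2e)
    finally have XE: "chi_hat_sq c w h = u * (sin (c*h))^2 / ((sin (c*h))^2 * D)" .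
    have "D \<noteq> 0" using s2e s2p c0 by auto
    thus ?thesis using ax XE Sp by (simp add: field_simps)
  qed
  have "rho c w h = (1/2) * (h^4 * r\<^sup>2) / (u * D)"
    unfolding rho_def by (rule rho_alg[OF u0 D_def]) (use key in simp)
  thus ?thesis unfolding u_def D_def r_def .
qed

end
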